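(* Let $q\ge1$, $L\ge2$, $m=q\frac{L-1}{L}$, and $f\in C^1(\mathbb{R}^n,\mathbb{R})$. Let $w_{1,t},\dots,w_{L,t}\in\mathbb{R}^n$ solve the $L_p$ steepest flow with decoupled weight decay of unit strength $$dw_{i,t}=-\operatorname{sign}(\nabla_{w_i}F(w_t))\odot|\nabla_{w_i}F(w_t)|^{q-1}dt-w_{i,t}\,dt,\qquad F(w)=f\left(\textstyle\prod_iw_i\right),$$ from a balanced initialization ($|w_{i,0}|^q=|w_{j,0}|^q$ for all $i,j$). Let $R$ be separable with $\nabla^2_xR(x)=\operatorname{diag}\left(\frac{1}{L|x_i|^m}\right)$. Then $x_t=\prod_iw_{i,t}$ satisfies $$d\nabla_xR(x_t)=-\operatorname{sign}(\nabla_xf(x_t))\odot|\nabla_xf(x_t)|^{q-1}dt-\nabla_xM_{\mathrm{reg}}(x_t)\,dt,$$ where the on-manifold regularizer $M_{\mathrm{reg}}$ is (up to an additive constant): (a) if $m\neq2$, $M_{\mathrm{reg}}(x)=\frac{L}{L(2-q)+q}\sum_{i\in[n]}|x_i|^{2-q\frac{L-1}{L}}$; (b) if $m=2$, $M_{\mathrm{reg}}(x)=\sum_{i\in[n]}\log(|x_i|)$.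
   Context: All operations are entrywise, $q$ is dual to $p$ ($1/p+1/q=1$). For a separable regularizer $h(x)=\sum_ih_i(x_i)$ and a separable mirror map $R$, the on-manifold regularizer is $M_{\mathrm{reg}}(x)=\sum_{i\in[n]}\int^{x_i}\partial_i^2R_i(s)\,\partial_ih_i(s)\,ds$; decoupled weight decay on the $w_i$ corresponds in $x$ to $\partial_ih_i(x_i)=Lx_i$. *)

theory Defs
  imports "HOL-Analysis.Analysis"
begin

definition sgnpow :: "real \<Rightarrow> real ^ 'n \<Rightarrow> real ^ 'n" where
  "sgnpow q v = (\<chi> k. sgn (v $ k) * \<bar>v $ k\<bar> powr (q - 1))"

definition prodw :: "nat \<Rightarrow> (nat \<Rightarrow> real ^ 'n) \<Rightarrow> real ^ 'n" where
  "prodw L w = (\<chi> k. \<Prod>i<L. w i $ k)"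

definition mexp :: "nat \<Rightarrow> real \<Rightarrow> real" where
  "mexp L q = q * (real L - 1) / real L"

text \<open>On-manifold regularizer M_reg (fixed representative; additive constants are irrelevant
  since only its gradient enters).\<close>
definition Mreg :: "nat \<Rightarrow> real \<Rightarrow> real ^ 'n \<Rightarrow> real" where
  "Mreg L q x =
     (if mexp L q \<noteq> 2
      then real L / (real L * (2 - q) + q) * (\<Sum>i\<in>UNIV. \<bar>x $ i\<bar> powr (2 - q * (real L - 1) / real L))
      else (\<Sum>i\<in>UNIV. ln \<bar>x $ i\<bar>))"

end

theory Submission
  imports Defs
begin

lemma deriv_abs_nz:
  fixes y :: real assumes "y \<noteq> 0"
  shows "(abs has_real_derivative sgn y) (at y)"
proof -
  have ev: "eventually (\<lambda>z. \<bar>z\<bar> = sgn y * z) (nhds y)"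
  proof (cases "y > 0")
    case True
    have "eventually (\<lambda>z. z > 0) (nhds y)" using True using eventually_nhds_in_open[of "{0<..}" y] True by simp
    then show ?thesis by (rule eventually_mono) (use True in auto)
  next
    case False
    then have "y < 0" using assms by auto
    have "eventually (\<lambda>z. z < 0) (nhds y)" using \<open>y<0\<close> using eventually_nhds_in_open[of "{..<0}" y] \<open>y<0\<close> by simp
    then show ?thesis by (rule eventually_mono) (use \<open>y<0\<close> in auto)
  qed
  have "((\<lambda>z. sgn y * z) has_real_derivative sgn y) (at y)"
    by (auto intro!: derivative_eq_intros)
  then show ?thesis
    by (subst DERIV_cong_ev[OF refl ev refl])
qed

lemma deriv_abs_powr_nz:
  fixes y e :: real assumes "y \<noteq> 0"
  shows "((\<lambda>z. \<bar>z\<bar> powr e) has_real_derivative e * \<bar>y\<bar> powr (e - 1) * sgn y) (at y)"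
  using DERIV_fun_powr[OF deriv_abs_nz[OF assms], of e] assms by simp

lemma deriv_abs_powr_gt1:
  fixes y q :: real assumes "q > 1"
  shows "((\<lambda>z. \<bar>z\<bar> powr q) has_real_derivative q * \<bar>y\<bar> powr (q - 1) * sgn y) (at y)"
proof (cases "y = 0")
  case False then show ?thesis by (rule deriv_abs_powr_nz)
next
  case True
  have lim: "((\<lambda>z. \<bar>z\<bar> powr (q - 1)) \<longlongrightarrow> 0) (at (0::real))"
    by (rule tendsto_zero_powrI) (auto intro!: tendsto_eq_intros simp: assms)
  have "((\<lambda>z. (\<bar>z\<bar> powr q - \<bar>0\<bar> powr q) / (z - 0)) \<longlongrightarrow> 0) (at (0::real))"
  proof (rule Lim_null_comparison[OF _ lim])
    show "\<forall>\<^sub>F z in at 0. norm ((\<bar>z\<bar> powr q - \<bar>0\<bar> powr q) / (z - 0)) \<le> \<bar>z\<bar> powr (q - 1)"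
    proof (rule eventually_mono[OF eventually_neq_at_within[of 0 0 UNIV]])
      fix z :: real assume "z \<noteq> 0"
      then have "\<bar>z\<bar> powr q = \<bar>z\<bar> powr (q - 1) * \<bar>z\<bar>"
        by (simp add: powr_diff)
      then show "norm ((\<bar>z\<bar> powr q - \<bar>0\<bar> powr q) / (z - 0)) \<le> \<bar>z\<bar> powr (q - 1)"
        using \<open>z \<noteq> 0\<close> by (simp add: abs_mult)
    qed
  qed
  then show ?thesis using True
    by (simp add: has_field_derivative_iff)
qed

lemma darboux_lt:
  fixes f f' :: "real \<Rightarrow> real"
  assumes ab: "a < b"
    and d: "\<And>s. s \<in> {a..b} \<Longrightarrow> (f has_real_derivative f' s) (at s within {a..b})"
    and ca: "f' a < c" and cb: "c < f' b"
  shows "\<exists>s\<in>{a<..<b}. f' s = c"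
proof -
  define g where "g s = f s - c * s" for s
  have dg: "(g has_real_derivative (f' s - c)) (at s within {a..b})" if "s \<in> {a..b}" for s
    unfolding g_def using d[OF that] by (auto intro!: derivative_eq_intros)
  have "continuous_on {a..b} g"
    using dg by (meson DERIV_continuous continuous_on_eq_continuous_within)
  then obtain m where m: "m \<in> {a..b}" and mmin: "\<And>y. y \<in> {a..b} \<Longrightarrow> g m \<le> g y"
    using continuous_attains_inf[of "{a..b}" g] ab by auto
  have "m \<noteq> a"
  proof
    assume "m = a"
    obtain d where "d > 0" and dd: "\<And>h. h > 0 \<Longrightarrow> a + h \<in> {a..b} \<Longrightarrow> h < d \<Longrightarrow> g (a + h) < g a"
      using has_real_derivative_neg_dec_right[OF dg[of a]] ca ab by force
    define h where "h = min (d/2) (b - a)"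
    have "g (a + h) < g a" using dd[of h] \<open>d>0\<close> ab by (auto simp: h_def)
    moreover have "g m \<le> g (a + h)" using mmin[of "a+h"] \<open>d>0\<close> ab by (auto simp: h_def)
    ultimately show False using \<open>m = a\<close> by simp
  qed
  have "m \<noteq> b"
  proof
    assume "m = b"
    obtain d where "d > 0" and dd: "\<And>h. h > 0 \<Longrightarrow> b - h \<in> {a..b} \<Longrightarrow> h < d \<Longrightarrow> g (b - h) < g b"
      using has_real_derivative_pos_inc_left[OF dg[of b]] cb ab by force
    define h where "h = min (d/2) (b - a)"
    have "g (b - h) < g b" using dd[of h] \<open>d>0\<close> ab by (auto simp: h_def)
    moreover have "g m \<le> g (b - h)" using mmin[of "b-h"] \<open>d>0\<close> ab by (auto simp: h_def)
    ultimately show False using \<open>m = b\<close> by simp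
  qed
  then have mi: "a < m" "m < b" using m \<open>m \<noteq> a\<close> by auto
  have "(g has_real_derivative (f' m - c)) (at m)"
    using dg[OF m] at_within_Icc_at[OF mi] by simp
  then have "f' m - c = 0"
    by (rule DERIV_local_min[of _ _ _ "min (m - a) (b - m)"]) (use mi in \<open>auto intro!: mmin simp: abs_less_iff\<close>)
  then show ?thesis using mi by auto
qed

lemma darboux_gt:
  fixes f f' :: "real \<Rightarrow> real"
  assumes ab: "a < b"
    and d: "\<And>s. s \<in> {a..b} \<Longrightarrow> (f has_real_derivative f' s) (at s within {a..b})"
    and ca: "f' a > c" and cb: "c > f' b"
  shows "\<exists>s\<in>{a<..<b}. f' s = c"
proof -
  have "\<exists>s\<in>{a<..<b}. - f' s = - c"
    by (rule darboux_lt[OF ab, of "\<lambda>s. - f s"]) (use d ca cb in \<open>auto intro!: derivative_eq_intros\<close>)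
  then show ?thesis by auto
qed

lemma gderiv_sep:
  fixes X :: "real^'n" and \<phi> :: "'n \<Rightarrow> real \<Rightarrow> real"
  assumes "\<And>i. (\<phi> i has_real_derivative d i) (at (X$i))"
  shows "GDERIV (\<lambda>x. \<Sum>i\<in>UNIV. \<phi> i (x$i)) X :> (\<chi> i. d i)"
proof -
  have each: "((\<lambda>x. \<phi> i (x$i)) has_derivative (\<lambda>h. h$i * d i)) (at X)" for i
    by (rule DERIV_compose_FDERIV[of "\<phi> i" "d i" "\<lambda>x. x$i", OF assms]) (rule bounded_linear_imp_has_derivative[OF bounded_linear_vec_nth])
  have "((\<lambda>x. \<Sum>i\<in>UNIV. \<phi> i (x$i)) has_derivative (\<lambda>h. \<Sum>i\<in>UNIV. h$i * d i)) (at X)"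
    by (rule has_derivative_sum) (use each in auto)
  moreover have "(\<lambda>h. \<Sum>i\<in>UNIV. h$i * d i) = (\<lambda>h. h \<bullet> (\<chi> i. d i))"
    by (auto simp: inner_vec_def)
  ultimately show ?thesis unfolding gderiv_def by simp
qed

lemma vec_vderiv_iff:
  fixes F :: "real \<Rightarrow> real^'n"
  shows "(F has_vector_derivative F') (at t within S) \<longleftrightarrow>
    (\<forall>k. ((\<lambda>s. F s $ k) has_real_derivative F' $ k) (at t within S))"
proof -
  have e: "(\<lambda>x. x * c) = (*) c" for c :: real by (auto simp: fun_eq_iff)
  show ?thesis unfolding has_vector_derivative_def has_field_derivative_def
    by (subst has_derivative_componentwise_within) (auto simp: Basis_vec_def inner_axis e)
qed

lemma alg1:
  fixes u p :: real
  shows "\<bar>u\<bar> powr r * sgn u * (sgn p * \<bar>p\<bar> powr r) = sgn (u * p) * \<bar>u * p\<bar> powr r"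
  by (simp add: sgn_mult abs_mult powr_mult)

lemma alg2:
  fixes u q :: real
  shows "\<bar>u\<bar> powr (q - 1) * sgn u * u = \<bar>u\<bar> powr q"
proof (cases "u = 0")
  case False
  then have "\<bar>u\<bar> powr (q - 1) * \<bar>u\<bar> = \<bar>u\<bar> powr q" by (simp add: powr_diff)
  moreover have "sgn u * u = \<bar>u\<bar>" by (simp add: abs_sgn sgn_mult_abs mult.commute)
  ultimately show ?thesis by (metis mult.assoc)
qed simp

lemma balance_ode:
  fixes u P :: "nat \<Rightarrow> real \<Rightarrow> real" and a x :: "real \<Rightarrow> real"
  assumes t: "t \<ge> 0"
  and du: "\<And>i s. i < L \<Longrightarrow> s \<in> {0..t} \<Longrightarrow> (u i has_real_derivative
      (- (sgn (P i s * a s) * \<bar>P i s * a s\<bar> powr (q-1)) - u i s)) (at s within {0..t})"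
  and Px: "\<And>i s. i < L \<Longrightarrow> u i s * P i s = x s"
  and dh: "\<And>i s. i < L \<Longrightarrow> s \<in> {0..t} \<Longrightarrow>
      ((\<lambda>z. \<bar>z\<bar> powr q) has_real_derivative q * \<bar>u i s\<bar> powr (q-1) * sgn (u i s)) (at (u i s))"
  and ij: "i < L" "j < L"
  and bal0: "\<bar>u i 0\<bar> powr q = \<bar>u j 0\<bar> powr q"
  shows "\<bar>u i t\<bar> powr q = \<bar>u j t\<bar> powr q"
proof -
  define S where "S s = sgn (x s * a s) * \<bar>x s * a s\<bar> powr (q-1)" for s
  have dhi: "((\<lambda>s. \<bar>u k s\<bar> powr q) has_real_derivative (- q * S s - q * \<bar>u k s\<bar> powr q)) (at s within {0..t})"
    if "k < L" "s \<in> {0..t}" for k s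
  proof -
    have "((\<lambda>s. \<bar>u k s\<bar> powr q) has_real_derivative
        (q * \<bar>u k s\<bar> powr (q-1) * sgn (u k s)) * (- (sgn (P k s * a s) * \<bar>P k s * a s\<bar> powr (q-1)) - u k s))
        (at s within {0..t})"
      by (rule DERIV_chain2[OF dh[OF that] du[OF that]])
    moreover have "(q * \<bar>u k s\<bar> powr (q-1) * sgn (u k s)) * (- (sgn (P k s * a s) * \<bar>P k s * a s\<bar> powr (q-1)) - u k s)
        = - q * (\<bar>u k s\<bar> powr (q-1) * sgn (u k s) * (sgn (P k s * a s) * \<bar>P k s * a s\<bar> powr (q-1)))
          - q * (\<bar>u k s\<bar> powr (q-1) * sgn (u k s) * u k s)"
      by (simp add: algebra_simps)
    moreover have "\<bar>u k s\<bar> powr (q-1) * sgn (u k s) * (sgn (P k s * a s) * \<bar>P k s * a s\<bar> powr (q-1)) = S s"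
      unfolding alg1 S_def using Px[OF that(1), of s] by (simp flip: mult.assoc)
    ultimately show ?thesis by (simp add: alg2)
  qed
  define \<delta> where "\<delta> s = exp (q * s) * (\<bar>u i s\<bar> powr q - \<bar>u j s\<bar> powr q)" for s
  have "(\<delta> has_real_derivative 0) (at s within {0..t})" if "s \<in> {0..t}" for s
  proof -
    have e: "((\<lambda>s. exp (q * s)) has_real_derivative exp (q * s) * q) (at s within {0..t})"
      by (auto intro!: derivative_eq_intros)
    have "(\<delta> has_real_derivative exp (q * s) * q * (\<bar>u i s\<bar> powr q - \<bar>u j s\<bar> powr q) +
        ((- q * S s - q * \<bar>u i s\<bar> powr q) - (- q * S s - q * \<bar>u j s\<bar> powr q)) * exp (q * s)) (at s within {0..t})"
      unfolding \<delta>_def by (rule DERIV_mult[OF e DERIV_diff[OF dhi dhi]]) (use ij that in auto)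
    then show ?thesis by (simp add: algebra_simps)
  qed
  then obtain c where "\<And>s. s \<in> {0..t} \<Longrightarrow> \<delta> s = c"
    using has_field_derivative_zero_constant[of "{0..t}" \<delta>] by auto
  then have "\<delta> t = \<delta> 0" using t by auto
  then show ?thesis using bal0 by (simp add: \<delta>_def)
qed

lemma sgn_powr0: "sgn (y::real) * \<bar>y\<bar> powr (1 - 1) = sgn y"
  by (cases "y = 0") auto

lemma balance_q1:
  fixes u P :: "nat \<Rightarrow> real \<Rightarrow> real" and a :: "real \<Rightarrow> real"
  assumes t: "t \<ge> 0" and L: "L \<ge> 2"
  and du: "\<And>i s. i < L \<Longrightarrow> s \<in> {0..t} \<Longrightarrow> (u i has_real_derivative
      (- (sgn (P i s * a s) * \<bar>P i s * a s\<bar> powr (1-1)) - u i s)) (at s within {0..t})"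
  and Pdef: "\<And>i s. P i s = (\<Prod>j\<in>{..<L}-{i}. u j s)"
  and nz: "\<And>i. i < L \<Longrightarrow> u i t \<noteq> 0"
  and bal0: "\<And>i j. i < L \<Longrightarrow> j < L \<Longrightarrow> \<bar>u i 0\<bar> powr 1 = \<bar>u j 0\<bar> powr 1"
  and ij: "i < L" "j < L"
  shows "\<bar>u i t\<bar> powr 1 = \<bar>u j t\<bar> powr 1"
proof -
  define \<sigma> where "\<sigma> k s = sgn (P k s * a s)" for k s
  define \<psi> where "\<psi> k s = exp s * u k s" for k s
  have dpsi: "(\<psi> k has_real_derivative - exp s * \<sigma> k s) (at s within {0..t})"
    if "k < L" "s \<in> {0..t}" for k s
  proof -
    have e: "((\<lambda>s. exp s) has_real_derivative exp s) (at s within {0..t})"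
      by (auto intro!: derivative_eq_intros)
    show ?thesis
      using DERIV_mult[OF e du[OF that]] unfolding \<psi>_def \<sigma>_def sgn_powr0
      by (simp add: algebra_simps)
  qed
  have sig: "\<sigma> k r \<in> {-1, 0, 1}" for k r
    unfolding \<sigma>_def by (auto simp: sgn_real_def)
  have const: "\<sigma> k s = \<sigma> k t" if k: "k < L" and s: "s \<in> {0..t}" for k s
  proof (rule ccontr)
    assume ne: "\<sigma> k s \<noteq> \<sigma> k t"
    then have st: "s < t" using s by (cases "s = t") auto
    define f' where "f' r = - exp r * \<sigma> k r" for r
    have d: "(\<psi> k has_real_derivative f' r) (at r within {s..t})" if "r \<in> {s..t}" for r
      using dpsi[OF k, of r] that s unfolding f'_def by (auto intro: DERIV_subset)
    have e1: "1 < exp s * 2" "1 < exp t * 2" "-1 < exp s * 2" "-1 < exp t * 2"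
    proof -
      have "1 \<le> exp s" "1 \<le> exp t" using s st by auto
      then show "1 < exp s * 2" "1 < exp t * 2" "-1 < exp s * 2" "-1 < exp t * 2" by linarith+
    qed
    have "\<exists>r\<in>{s<..<t}. f' r = -1/2 \<or> f' r = 1/2"
    proof -
      consider "\<sigma> k s = 1" | "\<sigma> k t = 1" | "\<sigma> k s = -1" "\<sigma> k t \<noteq> 1" | "\<sigma> k t = -1" "\<sigma> k s \<noteq> 1"
        using sig[of k s] sig[of k t] ne by auto
      then show ?thesis
      proof cases
        case 1
        then have "f' s < -1/2" "-1/2 < f' t" using e1 sig[of k t] ne by (auto simp: f'_def)
        then show ?thesis using darboux_lt[OF st d] by auto
      next
        case 2
        then have "f' t < -1/2" "-1/2 < f' s" using e1 sig[of k s] ne by (auto simp: f'_def)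
        then show ?thesis using darboux_gt[OF st d] by auto
      next
        case 3
        then have "f' s > 1/2" "1/2 > f' t" using e1 sig[of k t] ne by (auto simp: f'_def)
        then show ?thesis using darboux_gt[OF st d, of "1/2"] by auto
      next
        case 4
        then have "f' t > 1/2" "1/2 > f' s" using e1 sig[of k s] ne by (auto simp: f'_def)
        then show ?thesis using darboux_lt[OF st d, of "1/2"] by auto
      qed
    qed
    then obtain r where r: "r \<in> {s<..<t}" "f' r = -1/2 \<or> f' r = 1/2" by auto
    have "exp r \<ge> 1" using r s by auto
    then have "exp r * 2 \<noteq> 1" "exp r * 2 \<noteq> -1" by linarith+
    then show False using r(2) sig[of k r] by (auto simp: f'_def)
  qed
  show ?thesis
  proof (cases "a t = 0")
    case True
    have z: "\<sigma> k s = 0" if "k < L" "s \<in> {0..t}" for k s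
      using const[OF that] True by (simp add: \<sigma>_def)
    have eq: "\<psi> k t = \<psi> k 0" if k: "k < L" for k
    proof -
      have "(\<psi> k has_real_derivative 0) (at s within {0..t})" if "s \<in> {0..t}" for s
        using dpsi[OF k that] z[OF k that] by simp
      then obtain c where "\<And>s. s \<in> {0..t} \<Longrightarrow> \<psi> k s = c"
        using has_field_derivative_zero_constant[of "{0..t}" "\<psi> k"] by auto
      then show ?thesis using t by auto
    qed
    have "\<bar>u k t\<bar> = \<bar>u k 0\<bar> / exp t" if "k < L" for k
    proof -
      have "exp t * u k t = u k 0" using eq[OF that] unfolding \<psi>_def by simp
      then have "\<bar>exp t\<bar> * \<bar>u k t\<bar> = \<bar>u k 0\<bar>" by (metis abs_mult)
      then show ?thesis by (simp add: field_simps)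
    qed
    then show ?thesis using bal0[OF ij] ij by simp
  next
    case False
    have Pt: "P k t \<noteq> 0" if "k < L" for k
      unfolding Pdef using nz by (auto simp: prod_zero_iff)
    have unz: "u j s \<noteq> 0" if j: "j < L" and s: "s \<in> {0..t}" for j s
    proof -
      define k where "k = (if j = 0 then 1 else (0::nat))"
      have k: "k < L" "k \<noteq> j" using L by (auto simp: k_def)
      have "\<sigma> k t \<noteq> 0" using Pt[OF k(1)] False unfolding \<sigma>_def by (metis mult_eq_0_iff sgn_0_0)
      then have "\<sigma> k s \<noteq> 0" using const[OF k(1) s] by simp
      then have "P k s \<noteq> 0" by (auto simp: \<sigma>_def)
      then show ?thesis unfolding Pdef using j k by (auto simp: prod_zero_iff)
    qed
    have Px: "u k s * P k s = (\<Prod>j<L. u j s)" if "k < L" for k s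
      unfolding Pdef using that by (simp add: prod.remove[of "{..<L}" k])
    have dh: "((\<lambda>z. \<bar>z\<bar> powr 1) has_real_derivative 1 * \<bar>u k s\<bar> powr (1 - 1) * sgn (u k s)) (at (u k s))"
      if "k < L" "s \<in> {0..t}" for k s
      using deriv_abs_powr_nz[OF unz[OF that], of 1] by simp
    show ?thesis
      by (rule balance_ode[where x = "\<lambda>s. \<Prod>j<L. u j s" and P = P and a = a and L = L, OF t du Px dh ij bal0[OF ij]])
  qed
qed

lemma final_alg:
  fixes u :: "nat \<Rightarrow> real" and a q \<beta> :: real and L :: nat
  assumes L: "L \<ge> 1" and nz: "\<And>i. i < L \<Longrightarrow> u i \<noteq> 0"
    and bal: "\<And>i. i < L \<Longrightarrow> \<bar>u i\<bar> powr q = \<beta>"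
  defines "x \<equiv> \<Prod>i<L. u i" and "P \<equiv> \<lambda>i. \<Prod>j\<in>{..<L}-{i}. u j"
    and "m \<equiv> q * (real L - 1) / real L"
  shows "1 / (real L * \<bar>x\<bar> powr m) * (\<Sum>i<L. (- (sgn (P i * a) * \<bar>P i * a\<bar> powr (q-1)) - u i) * P i)
     = - (sgn a * \<bar>a\<bar> powr (q-1)) - x / \<bar>x\<bar> powr m"
proof -
  have b0: "\<beta> > 0" using bal[of 0] nz[of 0] L by auto
  have xnz: "x \<noteq> 0" unfolding x_def using nz by (auto simp: prod_zero_iff)
  have xq: "\<bar>x\<bar> powr q = \<beta> ^ L"
    unfolding x_def abs_prod prod_powr_distrib using bal by simp
  have Pq: "\<bar>P i\<bar> powr q = \<beta> ^ (L - 1)" if "i < L" for i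
  proof -
    have "\<bar>P i\<bar> powr q = (\<Prod>j\<in>{..<L}-{i}. \<beta>)"
      unfolding P_def abs_prod prod_powr_distrib using bal by (intro prod.cong) auto
    also have "\<dots> = \<beta> ^ (L - 1)" using that by simp
    finally show ?thesis .
  qed
  have xm: "\<bar>x\<bar> powr m = \<beta> ^ (L - 1)"
  proof -
    have "\<bar>x\<bar> powr m = (\<bar>x\<bar> powr q) powr ((real L - 1) / real L)"
      unfolding m_def powr_powr by (simp add: field_simps)
    also have "\<dots> = (\<beta> powr real L) powr ((real L - 1) / real L)"
      using xq b0 by (simp add: powr_realpow)
    also have "\<dots> = \<beta> powr (real (L - 1))"
      unfolding powr_powr using L by (simp add: of_nat_diff)
    also have "\<dots> = \<beta> ^ (L - 1)" using b0 by (simp add: powr_realpow)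
    finally show ?thesis .
  qed
  have xmpos: "\<bar>x\<bar> powr m > 0" using xnz by simp
  have trm: "(- (sgn (P i * a) * \<bar>P i * a\<bar> powr (q-1)) - u i) * P i
      = - (sgn a * \<bar>a\<bar> powr (q-1) * \<bar>x\<bar> powr m) - x" if "i < L" for i
  proof -
    have ux: "u i * P i = x" unfolding x_def P_def using that by (simp add: prod.remove[of "{..<L}" i])
    have "sgn (P i * a) * \<bar>P i * a\<bar> powr (q-1) * P i
        = sgn a * \<bar>a\<bar> powr (q-1) * (\<bar>P i\<bar> powr (q - 1) * sgn (P i) * P i)"
      by (simp add: sgn_mult abs_mult powr_mult algebra_simps)
    also have "\<dots> = sgn a * \<bar>a\<bar> powr (q-1) * \<bar>x\<bar> powr m"
      unfolding alg2 Pq[OF that] xm ..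
    finally show ?thesis using ux by (simp add: algebra_simps)
  qed
  have "(\<Sum>i<L. (- (sgn (P i * a) * \<bar>P i * a\<bar> powr (q-1)) - u i) * P i)
      = real L * (- (sgn a * \<bar>a\<bar> powr (q-1) * \<bar>x\<bar> powr m) - x)"
    using trm by simp
  then show ?thesis using xmpos L by (simp add: field_simps)
qed

lemma Mreg_grad:
  fixes X :: "real^'n" and q :: real and L :: nat
  assumes L: "L \<ge> 1" and nz: "\<And>k. X $ k \<noteq> 0"
  shows "GDERIV (Mreg L q) X :> (\<chi> k. X $ k / \<bar>X $ k\<bar> powr mexp L q)"
proof (cases "mexp L q = 2")
  case True
  have M: "Mreg L q = (\<lambda>x. \<Sum>i\<in>UNIV. ln \<bar>x $ i\<bar>)"
    using True by (auto simp: Mreg_def fun_eq_iff)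
  have d: "((\<lambda>y. ln \<bar>y\<bar>) has_real_derivative X $ k / \<bar>X $ k\<bar> powr mexp L q) (at (X $ k))" for k
  proof -
    have "((\<lambda>y. ln \<bar>y\<bar>) has_real_derivative inverse \<bar>X $ k\<bar> * sgn (X $ k)) (at (X $ k))"
      by (rule DERIV_chain2[OF DERIV_ln deriv_abs_nz[OF nz]]) (use nz in auto)
    moreover have "inverse \<bar>X $ k\<bar> * sgn (X $ k) = X $ k / \<bar>X $ k\<bar> powr mexp L q"
      using nz[of k] True by (cases "X $ k > 0") (auto simp: field_simps power2_eq_square)
    ultimately show ?thesis by simp
  qed
  show ?thesis unfolding M by (rule gderiv_sep[OF d])
next
  case False
  define m where "m = mexp L q"
  define c where "c = real L / (real L * (2 - q) + q)"
  define e where "e = 2 - q * (real L - 1) / real L"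
  have em: "e = 2 - m" unfolding e_def m_def mexp_def ..
  have den: "real L * (2 - q) + q \<noteq> 0"
  proof
    assume "real L * (2 - q) + q = 0"
    then have "q * (real L - 1) = 2 * real L" by (simp add: algebra_simps)
    then have "mexp L q = 2" using L by (simp add: mexp_def)
    then show False using False by simp
  qed
  have e2: "e = (real L * (2 - q) + q) / real L"
    unfolding e_def using L by (simp add: field_simps)
  have ce: "c * e = 1"
    unfolding c_def e2 using den L by simp
  have M: "Mreg L q = (\<lambda>x. \<Sum>i\<in>UNIV. c * \<bar>x $ i\<bar> powr e)"
    using False by (auto simp: Mreg_def fun_eq_iff c_def e_def sum_distrib_left)
  have d: "((\<lambda>y. c * \<bar>y\<bar> powr e) has_real_derivative X $ k / \<bar>X $ k\<bar> powr mexp L q) (at (X $ k))" for k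
  proof -
    have "((\<lambda>y. c * \<bar>y\<bar> powr e) has_real_derivative c * (e * \<bar>X $ k\<bar> powr (e - 1) * sgn (X $ k))) (at (X $ k))"
      by (rule DERIV_cmult[OF deriv_abs_powr_nz[OF nz]])
    moreover have "c * (e * \<bar>X $ k\<bar> powr (e - 1) * sgn (X $ k)) = X $ k / \<bar>X $ k\<bar> powr m"
    proof -
      have "\<bar>X $ k\<bar> powr (e - 1) = \<bar>X $ k\<bar> / \<bar>X $ k\<bar> powr m"
        unfolding em using nz[of k] by (simp add: powr_diff)
      moreover have "\<bar>X $ k\<bar> * sgn (X $ k) = X $ k" by (simp add: abs_mult_sgn)
      ultimately show ?thesis using ce
        by (metis (no_types, lifting) mult.commute mult.left_commute times_divide_eq_left mult_1)
    qed
    ultimately show ?thesis by (simp add: m_def)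
  qed
  show ?thesis unfolding M by (rule gderiv_sep[OF d])
qed

lemma gderiv_unique:
  assumes "GDERIV F x :> g1" "GDERIV F x :> g2"
  shows "g1 = g2"
proof -
  have "(\<lambda>h. h \<bullet> g1) = (\<lambda>h. h \<bullet> g2)"
    using has_derivative_unique assms unfolding gderiv_def by blast
  then have "(g1 - g2) \<bullet> g1 = (g1 - g2) \<bullet> g2" by metis
  then have "(g1 - g2) \<bullet> (g1 - g2) = 0" by (simp add: inner_diff_right)
  then show ?thesis by simp
qed

theorem theorem4:
  fixes q :: real and L :: nat
    and f :: "real ^ 'n \<Rightarrow> real" and Df :: "real ^ 'n \<Rightarrow> real ^ 'n"
    and w :: "nat \<Rightarrow> real \<Rightarrow> real ^ 'n"
    and T :: ereal
    and R :: "real ^ 'n \<Rightarrow> real" and Rk dR :: "'n \<Rightarrow> real \<Rightarrow> real"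
  defines "D \<equiv> {t::real. 0 \<le> t \<and> ereal t < T}"
  assumes q: "q \<ge> 1" and L: "L \<ge> 2"
    and f_grad: "\<And>x. GDERIV f x :> Df x" and f_C1: "continuous_on UNIV Df"
    and T: "0 < T"
    and flow: "\<And>i t. i < L \<Longrightarrow> t \<in> D \<Longrightarrow>
        \<exists>g. (GDERIV (\<lambda>v. f (prodw L ((\<lambda>j. w j t)(i := v)))) (w i t) :> g) \<and>
            (w i has_vector_derivative (- sgnpow q g - w i t)) (at t within D)"
    and balanced: "\<And>i j k. i < L \<Longrightarrow> j < L \<Longrightarrow>
        \<bar>w i 0 $ k\<bar> powr q = \<bar>w j 0 $ k\<bar> powr q"
    and R_sep: "\<And>x. R x = (\<Sum>k\<in>UNIV. Rk k (x $ k))"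
    and R_d1: "\<And>k s. s \<noteq> 0 \<Longrightarrow> (Rk k has_real_derivative dR k s) (at s)"
    and R_d2: "\<And>k s. s \<noteq> 0 \<Longrightarrow>
        (dR k has_real_derivative 1 / (real L * \<bar>s\<bar> powr mexp L q)) (at s)"
  shows "\<forall>t\<in>D. (\<forall>k. prodw L (\<lambda>i. w i t) $ k \<noteq> 0) \<longrightarrow>
          (\<exists>G. (GDERIV (Mreg L q) (prodw L (\<lambda>i. w i t)) :> G) \<and>
               ((\<lambda>s. \<chi> k. dR k (prodw L (\<lambda>i. w i s) $ k)) has_vector_derivative
                  (- sgnpow q (Df (prodw L (\<lambda>i. w i t))) - G)) (at t within D))"
proof (intro ballI impI)
  fix t assume tD: "t \<in> D" and nz: "\<forall>k. prodw L (\<lambda>i. w i t) $ k \<noteq> 0"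
  define X where "X s = prodw L (\<lambda>i. w i s)" for s
  define a where "a s k = Df (X s) $ k" for s k
  define P where "P i s k = (\<Prod>j\<in>{..<L}-{i}. w j s $ k)" for i s k
  have Xk: "X s $ k = (\<Prod>i<L. w i s $ k)" for s k by (simp add: X_def prodw_def)
  have t0: "0 \<le> t" using tD by (simp add: D_def)
  have sub: "{0..t} \<subseteq> D"
  proof
    fix s assume "s \<in> {0..t}"
    then have "0 \<le> s" "ereal s \<le> ereal t" by auto
    moreover have "ereal t < T" using tD by (simp add: D_def)
    ultimately show "s \<in> D" unfolding D_def using le_less_trans[of "ereal s" "ereal t" T] by simp
  qed
  have grad: "g = (\<chi> k. P i s k * a s k)"
    if i: "i < L" and gd: "GDERIV (\<lambda>v. f (prodw L ((\<lambda>j. w j s)(i := v)))) (w i s) :> g" for i s g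
  proof -
    define c where "c = (\<chi> k. P i s k)"
    define l where "l v = (\<chi> k. v $ k * c $ k)" for v :: "real^'n"
    have pl: "prodw L ((\<lambda>j. w j s)(i := v)) = l v" for v
    proof -
      have "(\<Prod>j<L. ((\<lambda>j. w j s)(i := v)) j $ k) = v $ k * P i s k" for k
      proof -
        have "(\<Prod>j\<in>{..<L}-{i}. ((\<lambda>j. w j s)(i := v)) j $ k) = P i s k"
          unfolding P_def by (rule prod.cong) auto
        then show ?thesis using i by (simp add: prod.remove[of "{..<L}" i])
      qed
      then show ?thesis by (simp add: prodw_def l_def c_def vec_eq_iff)
    qed
    have lin: "bounded_linear l"
    proof -
      have "linear l" by (auto simp: linear_iff l_def vec_eq_iff algebra_simps)
      then show ?thesis by (simp add: linear_conv_bounded_linear)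
    qed
    have "(\<lambda>j. w j s)(i := w i s) = (\<lambda>j. w j s)" by auto
    then have lx: "l (w i s) = X s" using pl[of "w i s"] by (simp add: X_def)
    have "((\<lambda>v. f (l v)) has_derivative (\<lambda>h. l h \<bullet> Df (X s))) (at (w i s))"
      using has_derivative_compose[OF bounded_linear_imp_has_derivative[OF lin], of f "\<lambda>h. h \<bullet> Df (X s)"]
        f_grad[of "X s", unfolded gderiv_def] lx by simp
    moreover have "(\<lambda>h. l h \<bullet> Df (X s)) = (\<lambda>h. h \<bullet> (\<chi> k. P i s k * a s k))"
      by (auto simp: fun_eq_iff inner_vec_def l_def c_def a_def algebra_simps)
    ultimately have "GDERIV (\<lambda>v. f (prodw L ((\<lambda>j. w j s)(i := v)))) (w i s) :> (\<chi> k. P i s k * a s k)"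
      unfolding gderiv_def pl by simp
    then show ?thesis using gderiv_unique gd by blast
  qed
  have du: "((\<lambda>s. w i s $ k) has_real_derivative
      (- (sgn (P i s k * a s k) * \<bar>P i s k * a s k\<bar> powr (q-1)) - w i s $ k)) (at s within D)"
    if i: "i < L" and s: "s \<in> D" for i s k
  proof -
    obtain g where g1: "GDERIV (\<lambda>v. f (prodw L ((\<lambda>j. w j s)(i := v)))) (w i s) :> g"
      and g2: "(w i has_vector_derivative (- sgnpow q g - w i s)) (at s within D)"
      using flow[OF i s] by blast
    have "g = (\<chi> k. P i s k * a s k)" by (rule grad[OF i g1])
    then show ?thesis using g2 unfolding vec_vderiv_iff by (simp add: sgnpow_def)
  qed
  have du': "((\<lambda>s. w i s $ k) has_real_derivative
      (- (sgn (P i s k * a s k) * \<bar>P i s k * a s k\<bar> powr (q-1)) - w i s $ k)) (at s within {0..t})"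
    if i: "i < L" and s: "s \<in> {0..t}" for i s k
    using DERIV_subset[OF du[OF i] sub] s sub by blast
  have unz: "w i t $ k \<noteq> 0" if "i < L" for i k
    using nz that unfolding X_def[symmetric] Xk by (auto simp: prod_zero_iff)
  have Px: "w i s $ k * P i s k = X s $ k" if "i < L" for i s k
    unfolding Xk P_def using that by (simp add: prod.remove[of "{..<L}" i])
  have bal: "\<bar>w i t $ k\<bar> powr q = \<bar>w j t $ k\<bar> powr q" if ij: "i < L" "j < L" for i j k
  proof (cases "q > 1")
    case True
    show ?thesis
      by (rule balance_ode[where u = "\<lambda>i s. w i s $ k" and P = "\<lambda>i s. P i s k" and a = "\<lambda>s. a s k"
            and x = "\<lambda>s. X s $ k", OF t0 du' Px deriv_abs_powr_gt1[OF True] ij balanced[OF ij]])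
  next
    case False
    then have q1: "q = 1" using q by simp
    show ?thesis
      unfolding q1
      by (rule balance_q1[where u = "\<lambda>i s. w i s $ k" and P = "\<lambda>i s. P i s k" and a = "\<lambda>s. a s k",
            OF t0 L du'[unfolded q1] _ unz balanced[unfolded q1] ij]) (simp_all add: P_def)
  qed
  define G where "G = (\<chi> k. X t $ k / \<bar>X t $ k\<bar> powr mexp L q)"
  have GD: "GDERIV (Mreg L q) (X t) :> G"
    unfolding G_def by (rule Mreg_grad) (use L nz in \<open>auto simp: X_def\<close>)
  have comp: "((\<lambda>s. dR k (X s $ k)) has_real_derivative
      - (sgn (a t k) * \<bar>a t k\<bar> powr (q-1)) - X t $ k / \<bar>X t $ k\<bar> powr mexp L q) (at t within D)" for k
  proof -
    define d where "d i = - (sgn (P i t k * a t k) * \<bar>P i t k * a t k\<bar> powr (q-1)) - w i t $ k" for i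
    have hd: "((\<lambda>s. w i s $ k) has_derivative (*) (d i)) (at t within D)" if "i \<in> {..<L}" for i
      using du[OF _ tD, of i k] that unfolding has_field_derivative_def d_def by simp
    have "((\<lambda>s. \<Prod>i<L. w i s $ k) has_derivative
        (\<lambda>y. \<Sum>i<L. d i * y * (\<Prod>j\<in>{..<L} - {i}. w j t $ k))) (at t within D)"
      by (rule has_derivative_prod[OF hd])
    moreover have "(\<lambda>y. \<Sum>i<L. d i * y * (\<Prod>j\<in>{..<L} - {i}. w j t $ k)) = (*) (\<Sum>i<L. d i * P i t k)"
    proof
      fix y
      show "(\<Sum>i<L. d i * y * (\<Prod>j\<in>{..<L} - {i}. w j t $ k)) = (\<Sum>i<L. d i * P i t k) * y"
        unfolding sum_distrib_right P_def by (rule sum.cong) (simp_all add: mult_ac)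
    qed
    ultimately have dX: "((\<lambda>s. X s $ k) has_real_derivative (\<Sum>i<L. d i * P i t k)) (at t within D)"
      unfolding has_field_derivative_def Xk[abs_def] by simp
    have Xnz: "X t $ k \<noteq> 0" using nz by (simp add: X_def)
    have dd: "((\<lambda>s. dR k (X s $ k)) has_real_derivative
        1 / (real L * \<bar>X t $ k\<bar> powr mexp L q) * (\<Sum>i<L. d i * P i t k)) (at t within D)"
      by (rule DERIV_chain2[OF R_d2[OF Xnz] dX])
    have fa: "1 / (real L * \<bar>\<Prod>i<L. w i t $ k\<bar> powr (q * (real L - 1) / real L)) *
      (\<Sum>i<L. (- (sgn ((\<Prod>j\<in>{..<L}-{i}. w j t $ k) * a t k) * \<bar>(\<Prod>j\<in>{..<L}-{i}. w j t $ k) * a t k\<bar> powr (q-1))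
         - w i t $ k) * (\<Prod>j\<in>{..<L}-{i}. w j t $ k))
      = - (sgn (a t k) * \<bar>a t k\<bar> powr (q-1)) - (\<Prod>i<L. w i t $ k) / \<bar>\<Prod>i<L. w i t $ k\<bar> powr (q * (real L - 1) / real L)"
    proof (rule final_alg[of L "\<lambda>i. w i t $ k" q "\<bar>w 0 t $ k\<bar> powr q" "a t k"])
      show "1 \<le> L" using L by simp
      show "w i t $ k \<noteq> 0" if "i < L" for i using unz[OF that] .
      show "\<bar>w i t $ k\<bar> powr q = \<bar>w 0 t $ k\<bar> powr q" if "i < L" for i
        using bal[of i 0 k] that L by simp
    qed
    have ee: "1 / (real L * \<bar>X t $ k\<bar> powr mexp L q) * (\<Sum>i<L. d i * P i t k)
        = - (sgn (a t k) * \<bar>a t k\<bar> powr (q-1)) - X t $ k / \<bar>X t $ k\<bar> powr mexp L q"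
      unfolding d_def P_def Xk mexp_def by (rule fa)
    show ?thesis using dd unfolding ee .
  qed
  show "\<exists>G. (GDERIV (Mreg L q) (prodw L (\<lambda>i. w i t)) :> G) \<and>
               ((\<lambda>s. \<chi> k. dR k (prodw L (\<lambda>i. w i s) $ k)) has_vector_derivative
                  (- sgnpow q (Df (prodw L (\<lambda>i. w i t))) - G)) (at t within D)"
  proof (intro exI conjI)
    show "GDERIV (Mreg L q) (prodw L (\<lambda>i. w i t)) :> G" using GD by (simp add: X_def)
    show "((\<lambda>s. \<chi> k. dR k (prodw L (\<lambda>i. w i s) $ k)) has_vector_derivative
                  (- sgnpow q (Df (prodw L (\<lambda>i. w i t))) - G)) (at t within D)"
      unfolding vec_vderiv_iff
    proof
      fix k
      show "((\<lambda>s. (\<chi> k. dR k (prodw L (\<lambda>i. w i s) $ k)) $ k) has_real_derivative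
          (- sgnpow q (Df (prodw L (\<lambda>i. w i t))) - G) $ k) (at t within D)"
        using comp[of k] unfolding X_def a_def G_def sgnpow_def by simp
    qed
  qed
qed

end
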